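(* Let $\mathcal{C}$ be a category and $A$ an object of $\mathcal{C}$ with $D(A)=k$ finite. Then every sequence $\cdots\leqslant^d X_i\leqslant^d\cdots\leqslant^d X_1\leqslant^d A$ of objects of $\mathcal{C}$ contains at most $k$ pairwise non-isomorphic objects.
   Context: In a category $\mathcal{C}$, $X\leqslant^d Y$ means there are morphisms $f:X\to Y$, $g:Y\to X$ with $g\circ f=\mathrm{id}_X$; $X<^p Y$ means $X\leqslant^d Y$ and $X\not\cong Y$. A chain of length $k$ for $A$ is $X_k<^p\cdots<^p X_1\leqslant^d A$; the depth $D(A)$ is the supremum of the lengths of all chains for $A$. *)

theory Defs
  imports Main "HOL-Library.Extended_Nat"
begin

text \<open>A category given by a set of objects Obj, hom-sets Hom X Y, identities idm X and
  composition cmp g f (meaning g after f).\<close>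

definition category ::
  "'o set \<Rightarrow> ('o \<Rightarrow> 'o \<Rightarrow> 'm set) \<Rightarrow> ('o \<Rightarrow> 'm) \<Rightarrow> ('m \<Rightarrow> 'm \<Rightarrow> 'm) \<Rightarrow> bool" where
  "category Obj Hom idm cmp \<longleftrightarrow>
     (\<forall>X\<in>Obj. idm X \<in> Hom X X) \<and>
     (\<forall>X\<in>Obj. \<forall>Y\<in>Obj. \<forall>Z\<in>Obj. \<forall>f\<in>Hom X Y. \<forall>g\<in>Hom Y Z. cmp g f \<in> Hom X Z) \<and>
     (\<forall>X\<in>Obj. \<forall>Y\<in>Obj. \<forall>f\<in>Hom X Y. cmp (idm Y) f = f \<and> cmp f (idm X) = f) \<and>
     (\<forall>W\<in>Obj. \<forall>X\<in>Obj. \<forall>Y\<in>Obj. \<forall>Z\<in>Obj. \<forall>f\<in>Hom W X. \<forall>g\<in>Hom X Y. \<forall>h\<in>Hom Y Z.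
        cmp h (cmp g f) = cmp (cmp h g) f)"

definition retract_le ::
  "('o \<Rightarrow> 'o \<Rightarrow> 'm set) \<Rightarrow> ('o \<Rightarrow> 'm) \<Rightarrow> ('m \<Rightarrow> 'm \<Rightarrow> 'm) \<Rightarrow> 'o \<Rightarrow> 'o \<Rightarrow> bool" where
  "retract_le Hom idm cmp X Y \<longleftrightarrow>
     (\<exists>f\<in>Hom X Y. \<exists>g\<in>Hom Y X. cmp g f = idm X)"

definition isomorphic ::
  "('o \<Rightarrow> 'o \<Rightarrow> 'm set) \<Rightarrow> ('o \<Rightarrow> 'm) \<Rightarrow> ('m \<Rightarrow> 'm \<Rightarrow> 'm) \<Rightarrow> 'o \<Rightarrow> 'o \<Rightarrow> bool" where
  "isomorphic Hom idm cmp X Y \<longleftrightarrow>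
     (\<exists>f\<in>Hom X Y. \<exists>g\<in>Hom Y X. cmp g f = idm X \<and> cmp f g = idm Y)"

definition proper_retract ::
  "('o \<Rightarrow> 'o \<Rightarrow> 'm set) \<Rightarrow> ('o \<Rightarrow> 'm) \<Rightarrow> ('m \<Rightarrow> 'm \<Rightarrow> 'm) \<Rightarrow> 'o \<Rightarrow> 'o \<Rightarrow> bool" where
  "proper_retract Hom idm cmp X Y \<longleftrightarrow>
     retract_le Hom idm cmp X Y \<and> \<not> isomorphic Hom idm cmp X Y"

text \<open>A chain of length k for A: objects X_1,...,X_k with X_k <p ... <p X_1 \<le>d A
  (for k = 0 the empty chain).\<close>
definition is_chain ::
  "'o set \<Rightarrow> ('o \<Rightarrow> 'o \<Rightarrow> 'm set) \<Rightarrow> ('o \<Rightarrow> 'm) \<Rightarrow> ('m \<Rightarrow> 'm \<Rightarrow> 'm) \<Rightarrow> 'o \<Rightarrow> nat \<Rightarrow> (nat \<Rightarrow> 'o) \<Rightarrow> bool" where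
  "is_chain Obj Hom idm cmp A k X \<longleftrightarrow>
     (\<forall>i\<in>{1..k}. X i \<in> Obj) \<and>
     (k \<ge> 1 \<longrightarrow> retract_le Hom idm cmp (X 1) A) \<and>
     (\<forall>i. 1 \<le> i \<and> i < k \<longrightarrow> proper_retract Hom idm cmp (X (Suc i)) (X i))"

definition depth ::
  "'o set \<Rightarrow> ('o \<Rightarrow> 'o \<Rightarrow> 'm set) \<Rightarrow> ('o \<Rightarrow> 'm) \<Rightarrow> ('m \<Rightarrow> 'm \<Rightarrow> 'm) \<Rightarrow> 'o \<Rightarrow> enat" where
  "depth Obj Hom idm cmp A = Sup {enat k | k. \<exists>X. is_chain Obj Hom idm cmp A k X}"

end

theory Submission
  imports Defs
begin

lemma retract_trans:
  assumes cat: "category Obj Hom idm cmp" and ob: "X \<in> Obj" "Y \<in> Obj" "Z \<in> Obj"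
    and r1: "retract_le Hom idm cmp X Y" and r2: "retract_le Hom idm cmp Y Z"
  shows "retract_le Hom idm cmp X Z"
proof -
  obtain f1 g1 where f1: "f1 \<in> Hom X Y" and g1: "g1 \<in> Hom Y X" and e1: "cmp g1 f1 = idm X"
    using r1 unfolding retract_le_def by blast
  obtain f2 g2 where f2: "f2 \<in> Hom Y Z" and g2: "g2 \<in> Hom Z Y" and e2: "cmp g2 f2 = idm Y"
    using r2 unfolding retract_le_def by blast
  note C = cat[unfolded category_def]
  have F: "cmp f2 f1 \<in> Hom X Z" using C ob f1 f2 by blast
  have G: "cmp g1 g2 \<in> Hom Z X" using C ob g1 g2 by blast
  have A: "\<And>W X Y Z f g h. W \<in> Obj \<Longrightarrow> X \<in> Obj \<Longrightarrow> Y \<in> Obj \<Longrightarrow> Z \<in> Obj \<Longrightarrow>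
      f \<in> Hom W X \<Longrightarrow> g \<in> Hom X Y \<Longrightarrow> h \<in> Hom Y Z \<Longrightarrow> cmp h (cmp g f) = cmp (cmp h g) f"
    using C by blast
  have a1: "cmp (cmp g1 g2) (cmp f2 f1) = cmp g1 (cmp g2 (cmp f2 f1))"
    using A[of X Z Y X "cmp f2 f1" g2 g1] ob F g1 g2 by simp
  have a2: "cmp g2 (cmp f2 f1) = cmp (cmp g2 f2) f1"
    using A[of X Y Z Y f1 f2 g2] ob f1 f2 g2 by simp
  have a3: "cmp (idm Y) f1 = f1" using C ob f1 by blast
  have "cmp (cmp g1 g2) (cmp f2 f1) = idm X"
    using a1 a2 a3 e1 e2 by simp
  then show ?thesis unfolding retract_le_def using F G by blast
qed

lemma retract_refl:
  assumes cat: "category Obj Hom idm cmp" and ob: "X \<in> Obj"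
  shows "retract_le Hom idm cmp X X"
  using assms unfolding category_def retract_le_def by metis

theorem proposition2p11:
  fixes Obj :: "'o set" and Hom :: "'o \<Rightarrow> 'o \<Rightarrow> 'm set"
    and idm :: "'o \<Rightarrow> 'm" and cmp :: "'m \<Rightarrow> 'm \<Rightarrow> 'm"
    and A :: 'o and k :: nat and N :: enat and X :: "nat \<Rightarrow> 'o"
  assumes cat: "category Obj Hom idm cmp"
    and A_ob: "A \<in> Obj"
    and depth: "depth Obj Hom idm cmp A = enat k"
    and X_ob: "\<forall>i. 1 \<le> i \<and> enat i \<le> N \<longrightarrow> X i \<in> Obj"
    and X1: "1 \<le> N \<longrightarrow> retract_le Hom idm cmp (X 1) A"
    and Xseq: "\<forall>i. 1 \<le> i \<and> enat (Suc i) \<le> N \<longrightarrow> retract_le Hom idm cmp (X (Suc i)) (X i)"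
  shows "\<forall>S. S \<subseteq> {i. 1 \<le> i \<and> enat i \<le> N} \<and>
             (\<forall>i\<in>S. \<forall>j\<in>S. i \<noteq> j \<longrightarrow> \<not> isomorphic Hom idm cmp (X i) (X j))
           \<longrightarrow> finite S \<and> card S \<le> k"
proof -
  have step: "retract_le Hom idm cmp (X (i + d)) (X i)" if "1 \<le> i" "enat (i + d) \<le> N" for i d
    using that
  proof (induction d)
    case 0
    then show ?case using retract_refl[OF cat] X_ob by simp
  next
    case (Suc d)
    have "enat (i + d) \<le> enat (i + Suc d)" by simp
    hence le: "enat (i + d) \<le> N" using Suc.prems(2) by (rule order_trans)
    have IH: "retract_le Hom idm cmp (X (i + d)) (X i)" using Suc.IH Suc.prems(1) le by blast
    have s2: "enat (Suc (i + d)) \<le> N" using Suc.prems(2) by simp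
    have "enat i \<le> enat (i + d)" by simp
    hence le3: "enat i \<le> N" using le by (rule order_trans)
    have r: "retract_le Hom idm cmp (X (Suc (i + d))) (X (i + d))"
      using Xseq Suc.prems(1) s2 by simp
    have o1: "X (Suc (i+d)) \<in> Obj" using X_ob Suc.prems(1) s2 by simp
    have o2: "X (i+d) \<in> Obj" using X_ob Suc.prems(1) le by simp
    have o3: "X i \<in> Obj" using X_ob Suc.prems(1) le3 by simp
    show ?case using retract_trans[OF cat o1 o2 o3 r IH] by simp
  qed
  have mono: "retract_le Hom idm cmp (X j) (X i)" if "1 \<le> i" "i \<le> j" "enat j \<le> N" for i j
    using step[of i "j - i"] that by simp
  have toA: "retract_le Hom idm cmp (X i) A" if "1 \<le> i" "enat i \<le> N" for i
  proof -
    have "enat 1 \<le> enat i" using that by simp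
    hence "enat 1 \<le> N" using that(2) by (rule order_trans)
    hence "retract_le Hom idm cmp (X 1) A" using X1 by (simp add: one_enat_def)
    moreover have "retract_le Hom idm cmp (X i) (X 1)" using mono[of 1 i] that by simp
    moreover have "X 1 \<in> Obj" using X_ob \<open>enat 1 \<le> N\<close> by simp
    ultimately show ?thesis using retract_trans[OF cat _ _ A_ob] X_ob that by blast
  qed
  have fin_bound: "card T \<le> k" if T: "finite T" "T \<subseteq> {i. 1 \<le> i \<and> enat i \<le> N}"
      "\<forall>i\<in>T. \<forall>j\<in>T. i \<noteq> j \<longrightarrow> \<not> isomorphic Hom idm cmp (X i) (X j)" for T
  proof -
    define L where "L = sorted_list_of_set T"
    define m where "m = card T"
    have lenL: "length L = m" using T by (simp add: L_def m_def)
    have setL: "set L = T" using T by (simp add: L_def)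
    have sL: "sorted_wrt (<) L" by (simp add: L_def)
    have dL: "distinct L" by (simp add: L_def)
    define Y where "Y j = X (L ! (j - 1))" for j
    have inT: "L ! (j - 1) \<in> T" if "1 \<le> j" "j \<le> m" for j
    proof -
      have "j - 1 < length L" using lenL that by simp
      thus ?thesis using setL nth_mem by blast
    qed
    have ch: "is_chain Obj Hom idm cmp A m Y"
      unfolding is_chain_def
    proof (intro conjI ballI impI allI)
      fix i assume "i \<in> {1..m}"
      then show "Y i \<in> Obj" using inT[of i] T X_ob unfolding Y_def by auto
    next
      assume "1 \<le> m"
      then show "retract_le Hom idm cmp (Y 1) A" using inT[of 1] T toA unfolding Y_def by auto
    next
      fix i assume i: "1 \<le> i \<and> i < m"
      have a: "L ! (Suc i - 1) \<in> T" using inT[of "Suc i"] i by simp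
      have b: "L ! (i - 1) \<in> T" using inT[of i] i by simp
      have lt: "L ! (i - 1) < L ! (Suc i - 1)"
        using sL i lenL by (simp add: sorted_wrt_iff_nth_less)
      have ne: "L ! (Suc i - 1) \<noteq> L ! (i - 1)" using lt by simp
      have r: "retract_le Hom idm cmp (Y (Suc i)) (Y i)"
        unfolding Y_def using mono[of "L ! (i - 1)" "L ! (Suc i - 1)"] a b T lt by auto
      have ni: "\<not> isomorphic Hom idm cmp (Y (Suc i)) (Y i)"
        unfolding Y_def using T(3) a b ne by blast
      show "proper_retract Hom idm cmp (Y (Suc i)) (Y i)"
        using r ni unfolding proper_retract_def by blast
    qed
    have "enat m \<le> depth Obj Hom idm cmp A"
      unfolding depth_def using ch by (intro Sup_upper) blast
    then show ?thesis using depth m_def by simp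
  qed
  show ?thesis
  proof (intro allI impI conjI)
    fix S assume S: "S \<subseteq> {i. 1 \<le> i \<and> enat i \<le> N} \<and>
             (\<forall>i\<in>S. \<forall>j\<in>S. i \<noteq> j \<longrightarrow> \<not> isomorphic Hom idm cmp (X i) (X j))"
    show "finite S"
    proof (rule ccontr)
      assume "infinite S"
      then obtain T where "T \<subseteq> S" "finite T" "card T = Suc k"
        using infinite_arbitrarily_large by blast
      then show False using fin_bound[of T] S by auto
    qed
    then show "card S \<le> k" using fin_bound S by blast
  qed
qed

end
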